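(* For every $p\geq 1$, the function $d_{\mathrm{GM},p}$ is an extended quasi-metric on $\mathcal{M}^m$. That is, for all mm-spaces $\mathcal{X},\mathcal{Y},\mathcal{Z}$: (i) $d_{\mathrm{GM},p}(\mathcal{X},\mathcal{Y})\in[0,\infty]$; (ii) $d_{\mathrm{GM},p}(\mathcal{X},\mathcal{Y})=0$ if and only if $\mathcal{X}$ and $\mathcal{Y}$ are isomorphic; (iii) $d_{\mathrm{GM},p}(\mathcal{X},\mathcal{Z})\leq d_{\mathrm{GM},p}(\mathcal{X},\mathcal{Y})+d_{\mathrm{GM},p}(\mathcal{Y},\mathcal{Z})$. In particular, $d_{\mathrm{GM},p}$ depends only on the isomorphism classes of its arguments; it may take the value $\infty$ and need not be symmetric.
   Context: A metric measure space (mm-space) is a triple $\mathcal{X}=(X,d_X,\mu_X)$ where $(X,d_X)$ is a compact metric space and $\mu_X$ is a Borel probability measure on $X$ with full support ($\mathrm{supp}[\mu_X]=X$). An isomorphism $\mathcal{X}\to\mathcal{Y}$ is a map $\phi:X\to Y$ that is an isometry and satisfies $\phi_\#\mu_X=\mu_Y$; $\mathcal{M}^m$ denotes the collection of isomorphism classes of mm-spaces. For mm-spaces $\mathcal{X},\mathcal{Y}$, let $\mathcal{T}(\mu_X,\mu_Y)$ be the set of Borel measurable maps $\phi:X\to Y$ with $\phi_\#\mu_X=\mu_Y$. For $p\in[1,\infty)$ the Gromov–Monge $p$-distance is $$d_{\mathrm{GM},p}(\mathcal{X},\mathcal{Y})=\inf_{\phi\in\mathcal{T}(\mu_X,\mu_Y)}\left(\iint_{X\times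 X}\big|d_X(x,x')-d_Y(\phi(x),\phi(x'))\big|^p\,\mu_X(dx)\,\mu_X(dx')\right)^{1/p},$$ with the convention $d_{\mathrm{GM},p}(\mathcal{X},\mathcal{Y})=\infty$ if $\mathcal{T}(\mu_X,\mu_Y)=\emptyset$. An extended quasi-metric is a function satisfying all metric axioms except symmetry and allowed to take the value $\infty$. *)

theory Defs
  imports "HOL-Probability.Probability"
begin

definition mm_space :: "'a set \<Rightarrow> ('a \<Rightarrow> 'a \<Rightarrow> real) \<Rightarrow> 'a measure \<Rightarrow> bool" where
  "mm_space X d mu \<longleftrightarrow>
     Metric_space X d \<and>
     compact_space (Metric_space.mtopology X d) \<and>
     prob_space mu \<and>
     space mu = X \<and>
     sets mu = sigma_sets X {U. openin (Metric_space.mtopology X d) U} \<and>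
     (\<forall>U. openin (Metric_space.mtopology X d) U \<and> U \<noteq> {} \<longrightarrow> emeasure mu U > 0)"

definition mm_iso ::
  "'a set \<Rightarrow> ('a \<Rightarrow> 'a \<Rightarrow> real) \<Rightarrow> 'a measure \<Rightarrow>
   'b set \<Rightarrow> ('b \<Rightarrow> 'b \<Rightarrow> real) \<Rightarrow> 'b measure \<Rightarrow> bool" where
  "mm_iso X dX muX Y dY muY \<longleftrightarrow>
     (\<exists>\<phi>. bij_betw \<phi> X Y \<and> (\<forall>x\<in>X. \<forall>x'\<in>X. dY (\<phi> x) (\<phi> x') = dX x x') \<and>
          \<phi> \<in> measurable muX muY \<and> distr muX muY \<phi> = muY)"

definition ennroot :: "real \<Rightarrow> ennreal \<Rightarrow> ennreal" where
  "ennroot p x = (if x = \<top> then \<top> else ennreal (enn2real x powr (1 / p)))"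

definition transport_maps :: "'a measure \<Rightarrow> 'b measure \<Rightarrow> ('a \<Rightarrow> 'b) set" where
  "transport_maps muX muY = {\<phi>. \<phi> \<in> measurable muX muY \<and> distr muX muY \<phi> = muY}"

text \<open>Gromov--Monge p-distance (infimum over the empty set is infinity).\<close>

definition dGM ::
  "real \<Rightarrow> ('a \<Rightarrow> 'a \<Rightarrow> real) \<Rightarrow> 'a measure \<Rightarrow>
   ('b \<Rightarrow> 'b \<Rightarrow> real) \<Rightarrow> 'b measure \<Rightarrow> ennreal" where
  "dGM p dX muX dY muY =
     (INF \<phi>\<in>transport_maps muX muY.
        ennroot p (\<integral>\<^sup>+ z. ennreal (\<bar>dX (fst z) (snd z) - dY (\<phi> (fst z)) (\<phi> (snd z))\<bar> powr p)
                        \<partial>(muX \<Otimes>\<^sub>M muX)))"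

end

theory Submission
  imports Defs "HOL-Library.Diagonal_Subsequence"
begin

lemma mm_space_D:
  assumes "mm_space X d mu"
  shows "Metric_space X d" "compact_space (Metric_space.mtopology X d)" "prob_space mu"
    "space mu = X" "sets mu = sigma_sets X {U. openin (Metric_space.mtopology X d) U}"
    "\<And>U. openin (Metric_space.mtopology X d) U \<Longrightarrow> U \<noteq> {} \<Longrightarrow> emeasure mu U > 0"
  using assms unfolding mm_space_def by auto

lemma mm_open_sets:
  assumes "mm_space X d mu" "openin (Metric_space.mtopology X d) U"
  shows "U \<in> sets mu"
  using mm_space_D(5)[OF assms(1)] assms(2) by auto

lemma (in Metric_space) compact_countable_dense:
  assumes "compact_space mtopology"
  shows "\<exists>D. countable D \<and> D \<subseteq> M \<and> (\<forall>x\<in>M. \<forall>e>0. \<exists>s\<in>D. d s x < e)"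
proof -
  have "compactin mtopology M" using assms unfolding compact_space_def by simp
  then have tb: "mtotally_bounded M"
    by (rule compactin_imp_mtotally_bounded)
  have ex: "\<forall>m::nat. \<exists>K. finite K \<and> K \<subseteq> M \<and> M \<subseteq> (\<Union>x\<in>K. mball x (1/(Suc m)))"
  proof
    fix m :: nat
    have pos: "(1/real (Suc m)) > 0" by simp
    show "\<exists>K. finite K \<and> K \<subseteq> M \<and> M \<subseteq> (\<Union>x\<in>K. mball x (1/(Suc m)))"
      using tb[unfolded mtotally_bounded_def, rule_format, OF pos] .
  qed
  obtain K where K: "\<forall>m. finite (K m) \<and> K m \<subseteq> M \<and> M \<subseteq> (\<Union>x\<in>K m. mball x (1/(Suc m)))"
    using choice[OF ex] by (elim exE)
  define D where "D = (\<Union>m. K m)"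
  have "countable D" unfolding D_def using K by (simp add: countable_finite)
  moreover have "D \<subseteq> M" unfolding D_def using K by blast
  moreover have "\<forall>x\<in>M. \<forall>e>0. \<exists>s\<in>D. d s x < e"
  proof (intro ballI allI impI)
    fix x e assume x: "x \<in> M" and e: "(e::real) > 0"
    obtain m where m: "1 / real (Suc m) < e"
      using e by (metis nat_approx_posE)
    obtain s where s: "s \<in> K m" "x \<in> mball s (1/(Suc m))" using K x by blast
    have "d s x < e" using s(2) m by simp
    moreover have "s \<in> D" unfolding D_def using s(1) by blast
    ultimately show "\<exists>s\<in>D. d s x < e" by blast
  qed
  ultimately show ?thesis by blast
qed

lemma mm_dist_measurable:
  assumes "mm_space X d mu"
  shows "(\<lambda>z. d (fst z) (snd z)) \<in> borel_measurable (mu \<Otimes>\<^sub>M mu)"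
proof -
  interpret Metric_space X d using mm_space_D[OF assms] by simp
  obtain D where D: "countable D" "D \<subseteq> X" "\<And>x e. x\<in>X \<Longrightarrow> e>0 \<Longrightarrow> \<exists>s\<in>D. d s x < e"
    using compact_countable_dense[OF mm_space_D(2)[OF assms]] by metis
  have sp: "space (mu \<Otimes>\<^sub>M mu) = X \<times> X"
    using mm_space_D(4)[OF assms] by (simp add: space_pair_measure)
  show ?thesis
  proof (rule borel_measurableI_less)
    fix r :: real
    define I where "I = D \<times> ((\<rat>::real set) \<times> (\<rat>::real set))"
    define A where "A = (\<lambda>(s,q,q'). if q + q' < r then mball s q \<times> mball s q' else {})"
    have eq: "{z \<in> space (mu \<Otimes>\<^sub>M mu). d (fst z) (snd z) < r} = (\<Union>i\<in>I. A i)"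
    proof
      show "(\<Union>i\<in>I. A i) \<subseteq> {z \<in> space (mu \<Otimes>\<^sub>M mu). d (fst z) (snd z) < r}"
      proof
        fix z assume "z \<in> (\<Union>i\<in>I. A i)"
        then obtain s q q' where "(s,q,q') \<in> I" "z \<in> A (s,q,q')" by auto
        then have "q + q' < r" "fst z \<in> mball s q" "snd z \<in> mball s q'"
          unfolding A_def by (auto split: if_splits)
        then show "z \<in> {z \<in> space (mu \<Otimes>\<^sub>M mu). d (fst z) (snd z) < r}"
          using sp triangle[of "fst z" s "snd z"] commute[of s "fst z"] by (auto simp: mem_Times_iff)
      qed
    next
      show "{z \<in> space (mu \<Otimes>\<^sub>M mu). d (fst z) (snd z) < r} \<subseteq> (\<Union>i\<in>I. A i)"
      proof
        fix z assume z: "z \<in> {z \<in> space (mu \<Otimes>\<^sub>M mu). d (fst z) (snd z) < r}"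
        obtain x y where xy: "z = (x,y)" by force
        have x: "x \<in> X" and y: "y \<in> X" and dr: "d x y < r" using z sp xy by auto
        define \<delta> where "\<delta> = (r - d x y) / 4"
        have \<delta>: "\<delta> > 0" using dr by (simp add: \<delta>_def)
        obtain s where s: "s \<in> D" "d s x < \<delta>" using D(3)[OF x \<delta>] by blast
        have sX: "s \<in> X" using s D(2) by blast
        obtain q where q: "q \<in> \<rat>" "d s x < q" "q < d s x + \<delta>"
          using Rats_dense_in_real[of "d s x" "d s x + \<delta>"] \<delta> by auto
        obtain q' where q': "q' \<in> \<rat>" "d s y < q'" "q' < d s y + \<delta>"
          using Rats_dense_in_real[of "d s y" "d s y + \<delta>"] \<delta> by auto
        have "d s y \<le> d s x + d x y" using triangle[OF sX x y] .
        moreover have "4 * \<delta> = r - d x y" by (simp add: \<delta>_def)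
        ultimately have "q + q' < r" using q q' s by linarith
        then have "z \<in> A (s,q,q')" unfolding A_def using xy x y sX q q' by auto
        moreover have "(s,q,q') \<in> I" unfolding I_def using s q q' by auto
        ultimately show "z \<in> (\<Union>i\<in>I. A i)" by blast
      qed
    qed
    have "countable I" unfolding I_def using D(1) countable_rat by (metis countable_SIGMA)
    moreover have "\<And>i. i \<in> I \<Longrightarrow> A i \<in> sets (mu \<Otimes>\<^sub>M mu)"
    proof -
      fix i assume "i \<in> I"
      obtain s q q' where i: "i = (s,q,q')" by (cases i) auto
      have "mball s q \<in> sets mu" "mball s q' \<in> sets mu"
        by (rule mm_open_sets[OF assms], simp)+
      then have "mball s q \<times> mball s q' \<in> sets (mu \<Otimes>\<^sub>M mu)" by (rule pair_measureI)
      then show "A i \<in> sets (mu \<Otimes>\<^sub>M mu)" unfolding A_def i by simp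
    qed
    ultimately show "{z \<in> space (mu \<Otimes>\<^sub>M mu). d (fst z) (snd z) < r} \<in> sets (mu \<Otimes>\<^sub>M mu)"
      unfolding eq by (rule sets.countable_UN'')
  qed
qed

lemma conv0:
  fixes p t x y :: real
  assumes p: "p \<ge> 1" and t: "0 \<le> t" "t \<le> 1" and x: "x \<ge> 0" and y: "y \<ge> 0"
  shows "((1-t)*x + t*y) powr p \<le> (1-t) * x powr p + t * y powr p"
proof (cases "x > 0 \<and> y > 0")
  case True
  have "convex_on {0<..} (\<lambda>x::real. x powr p)" by (rule powr_convex[OF p])
  from convex_onD[OF this t] True show ?thesis by simp
next
  case False
  have tp: "s powr p \<le> s" if "0 \<le> s" "s \<le> 1" for s :: real
  proof -
    have "s powr p \<le> s powr 1" using that p by (intro powr_mono') auto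
    also have "\<dots> = s" using that by simp
    finally show ?thesis .
  qed
  show ?thesis
  proof (cases "x = 0")
    case True
    have "(t*y) powr p = t powr p * y powr p" using t y by (simp add: powr_mult)
    also have "\<dots> \<le> t * y powr p" using tp[OF t] by (simp add: mult_right_mono)
    finally show ?thesis using True p by simp
  next
    case False
    then have "y = 0" using \<open>\<not> (x > 0 \<and> y > 0)\<close> x y by linarith
    have "((1-t)*x) powr p = (1-t) powr p * x powr p" using t x by (simp add: powr_mult)
    also have "\<dots> \<le> (1-t) * x powr p" using tp[of "1-t"] t by (simp add: mult_right_mono)
    finally show ?thesis using \<open>y = 0\<close> p by simp
  qed
qed

lemma alg1:
  fixes a b A B C U V :: real
  assumes "a > 0" "b > 0" "A > 0" "B > 0"
  shows "(a+b)*C*(a/(a+b)*(U/(a*A)) + b/(a+b)*(V/(b*B))) = C/A*U + C/B*V"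
proof -
  have h1: "a/(a+b)*(U/(a*A)) = U/((a+b)*A)" using assms(1) by fastforce
  have h2: "b/(a+b)*(V/(b*B)) = V/((a+b)*B)" using assms(2) by fastforce
  have h3: "(a+b)*C*(U/((a+b)*A)) = C/A*U" using assms(1,2) by auto
  have h4: "(a+b)*C*(V/((a+b)*B)) = C/B*V" using assms(1,2) by auto
  show ?thesis unfolding h1 h2 distrib_left h3 h4 ..
qed

lemma alg2:
  fixes a b A B C :: real
  assumes "a > 0" "b > 0" "A > 0" "B > 0"
  shows "(C / A) * (a * A) + (C / B) * (b * B) = (a+b) * C"
  by (smt (verit, best) assms(3,4) distrib_right divide_eq_eq mult.left_commute)

lemma pw_minkowski:
  fixes p a b u v :: real
  assumes p: "p \<ge> 1" and a: "a > 0" and b: "b > 0" and u: "u \<ge> 0" and v: "v \<ge> 0"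
  shows "(u+v) powr p \<le> (a+b) powr (p-1) / a powr (p-1) * u powr p + (a+b) powr (p-1) / b powr (p-1) * v powr p"
proof -
  define t where "t = b / (a+b)"
  have t: "0 \<le> t" "t \<le> 1" using a b by (auto simp: t_def field_simps)
  have "1 - t = a / (a+b)" using a b by (simp add: t_def field_simps)
  have ab: "a + b \<noteq> 0" using a b by simp
  have e1: "(1-t)*(u/a) = u/(a+b)" using a ab unfolding \<open>1 - t = a / (a+b)\<close> by simp
  have e2: "t*(v/b) = v/(a+b)" using b ab unfolding t_def by simp
  have uv: "u + v = (a+b) * ((1-t) * (u/a) + t * (v/b))"
    unfolding e1 e2 add_divide_distrib[symmetric] using ab by simp
  have "(u+v) powr p = (a+b) powr p * ((1-t) * (u/a) + t * (v/b)) powr p"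
    unfolding uv using a b t u v by (simp add: powr_mult)
  also have "\<dots> \<le> (a+b) powr p * ((1-t) * (u/a) powr p + t * (v/b) powr p)"
    using conv0[OF p t, of "u/a" "v/b"] a b u v by (intro mult_left_mono) auto
  also have "\<dots> = (a+b) powr p * (a/(a+b) * (u powr p / a powr p) + b/(a+b) * (v powr p / b powr p))"
    unfolding \<open>1 - t = a / (a+b)\<close> using a b u v by (simp add: t_def powr_divide)
  also have "\<dots> = (a+b) powr (p-1) / a powr (p-1) * u powr p + (a+b) powr (p-1) / b powr (p-1) * v powr p"
  proof -
    have e1: "a powr p = a * a powr (p-1)" using a by (simp add: powr_mult_base)
    have e2: "b powr p = b * b powr (p-1)" using b by (simp add: powr_mult_base)
    have e3: "(a+b) powr p = (a+b) * (a+b) powr (p-1)" using a b by (simp add: powr_mult_base)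
    show ?thesis unfolding e1 e2 e3 using a b by (intro alg1) auto
  qed
  finally show ?thesis .
qed


lemma ennroot_top [simp]: "ennroot p \<top> = \<top>"
  by (simp add: ennroot_def)

lemma ennroot_fin: "x \<noteq> \<top> \<Longrightarrow> ennroot p x = ennreal (enn2real x powr (1/p))"
  by (simp add: ennroot_def)

lemma ennroot_mono:
  assumes "p > 0" "x \<le> y" shows "ennroot p x \<le> ennroot p y"
proof (cases "y = \<top>")
  case True then show ?thesis by simp
next
  case False
  then have "x \<noteq> \<top>" using assms(2) top.extremum_unique by fastforce
  have "enn2real x \<le> enn2real y" using assms(2) False by (intro enn2real_mono) (auto simp: top.not_eq_extremum)
  then have "enn2real x powr (1/p) \<le> enn2real y powr (1/p)"
    using assms(1) by (intro powr_mono2) auto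
  then show ?thesis using False \<open>x \<noteq> \<top>\<close> by (simp add: ennroot_fin ennreal_leI)
qed

lemma ennroot_zero [simp]: "ennroot p 0 = 0"
  by (simp add: ennroot_def)

lemma minkowski_nn:
  fixes f g :: "'a \<Rightarrow> real"
  assumes p: "p \<ge> 1" and f: "f \<in> borel_measurable M" and g: "g \<in> borel_measurable M"
    and f0: "\<And>x. x \<in> space M \<Longrightarrow> f x \<ge> 0" and g0: "\<And>x. x \<in> space M \<Longrightarrow> g x \<ge> 0"
  shows "ennroot p (\<integral>\<^sup>+x. ennreal ((f x + g x) powr p) \<partial>M)
     \<le> ennroot p (\<integral>\<^sup>+x. ennreal (f x powr p) \<partial>M) + ennroot p (\<integral>\<^sup>+x. ennreal (g x powr p) \<partial>M)"
proof (cases "(\<integral>\<^sup>+x. ennreal (f x powr p) \<partial>M) = \<top> \<or> (\<integral>\<^sup>+x. ennreal (g x powr p) \<partial>M) = \<top>")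
  case True then show ?thesis by auto
next
  case False
  define F where "F = (\<integral>\<^sup>+x. ennreal (f x powr p) \<partial>M)"
  define G where "G = (\<integral>\<^sup>+x. ennreal (g x powr p) \<partial>M)"
  define S where "S = (\<integral>\<^sup>+x. ennreal ((f x + g x) powr p) \<partial>M)"
  have Ft: "F \<noteq> \<top>" and Gt: "G \<noteq> \<top>" using False by (auto simp: F_def G_def)
  define A where "A = enn2real F powr (1/p)"
  define B where "B = enn2real G powr (1/p)"
  have A0: "A \<ge> 0" and B0: "B \<ge> 0" by (auto simp: A_def B_def)
  have p0: "p > 0" using p by simp
  have FA: "F = ennreal (A powr p)"
  proof -
    have "A powr p = enn2real F" unfolding A_def using p0 by (simp add: powr_powr)
    then show ?thesis using Ft by (simp add: ennreal_enn2real_if)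
  qed
  have GB: "G = ennreal (B powr p)"
  proof -
    have "B powr p = enn2real G" unfolding B_def using p0 by (simp add: powr_powr)
    then show ?thesis using Gt by (simp add: ennreal_enn2real_if)
  qed
  have bound: "S \<le> ennreal ((A + B + 2*e) powr p)" if e: "e > 0" for e :: real
  proof -
    define a where "a = A + e"
    define b where "b = B + e"
    have a: "a > 0" and b: "b > 0" using A0 B0 e by (auto simp: a_def b_def)
    define c1 where "c1 = (a+b) powr (p-1) / a powr (p-1)"
    define c2 where "c2 = (a+b) powr (p-1) / b powr (p-1)"
    have c1: "c1 \<ge> 0" and c2: "c2 \<ge> 0" by (auto simp: c1_def c2_def)
    have "S \<le> (\<integral>\<^sup>+x. ennreal (c1 * f x powr p) + ennreal (c2 * g x powr p) \<partial>M)"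
      unfolding S_def
    proof (rule nn_integral_mono)
      fix x assume x: "x \<in> space M"
      have "(f x + g x) powr p \<le> c1 * f x powr p + c2 * g x powr p"
        unfolding c1_def c2_def using pw_minkowski[OF p a b f0[OF x] g0[OF x]] .
      then show "ennreal ((f x + g x) powr p) \<le> ennreal (c1 * f x powr p) + ennreal (c2 * g x powr p)"
        using c1 c2 by (simp add: ennreal_plus[symmetric] del: ennreal_plus)
    qed
    also have "\<dots> = (\<integral>\<^sup>+x. ennreal (c1 * f x powr p) \<partial>M) + (\<integral>\<^sup>+x. ennreal (c2 * g x powr p) \<partial>M)"
      using f g by (intro nn_integral_add) auto
    also have "\<dots> = ennreal c1 * F + ennreal c2 * G"
      unfolding F_def G_def using c1 c2 f g
      by (simp add: ennreal_mult nn_integral_cmult)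
    also have "\<dots> = ennreal (c1 * A powr p + c2 * B powr p)"
      unfolding FA GB using c1 c2 by (simp add: ennreal_mult ennreal_plus)
    also have "\<dots> \<le> ennreal (c1 * a powr p + c2 * b powr p)"
    proof (rule ennreal_leI)
      have "A powr p \<le> a powr p" using A0 p0 by (intro powr_mono2) (auto simp: a_def e less_imp_le)
      moreover have "B powr p \<le> b powr p" using B0 p0 by (intro powr_mono2) (auto simp: b_def e less_imp_le)
      ultimately show "c1 * A powr p + c2 * B powr p \<le> c1 * a powr p + c2 * b powr p"
        using c1 c2 by (intro add_mono mult_left_mono) auto
    qed
    also have "c1 * a powr p + c2 * b powr p = (a+b) powr p"
    proof -
      have e1: "a powr p = a * a powr (p-1)" using a by (simp add: powr_mult_base)
      have e2: "b powr p = b * b powr (p-1)" using b by (simp add: powr_mult_base)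
      have e3: "(a+b) powr p = (a+b) * (a+b) powr (p-1)" using a b by (simp add: powr_mult_base)
      show ?thesis unfolding c1_def c2_def e1 e2 e3 using a b by (intro alg2) auto
    qed
    also have "a + b = A + B + 2*e" by (simp add: a_def b_def)
    finally show ?thesis .
  qed
  have St: "S \<noteq> \<top>" using bound[of 1] by (auto simp: top_unique)
  have "enn2real S powr (1/p) \<le> A + B"
  proof (rule field_le_epsilon)
    fix e :: real assume e: "e > 0"
    have "enn2real S \<le> (A + B + 2*(e/2)) powr p"
      using bound[of "e/2"] e St by (simp add: enn2real_leI)
    then have "enn2real S powr (1/p) \<le> ((A + B + e) powr p) powr (1/p)"
      using p0 by (intro powr_mono2) auto
    also have "\<dots> = A + B + e" using p0 A0 B0 e by (simp add: powr_powr)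
    finally show "enn2real S powr (1/p) \<le> A + B + e" .
  qed
  then have "ennroot p S \<le> ennreal A + ennreal B"
    using St A0 B0 by (simp add: ennroot_fin ennreal_plus[symmetric] del: ennreal_plus ennreal_leI)
  then show ?thesis using Ft Gt by (simp add: S_def F_def G_def A_def B_def ennroot_fin)
qed

lemma INF_add_le:
  fixes f :: "'i \<Rightarrow> ennreal" and g :: "'j \<Rightarrow> ennreal"
  assumes le: "\<And>a b. a \<in> A \<Longrightarrow> b \<in> B \<Longrightarrow> c \<le> f a + g b"
  shows "c \<le> (INF a\<in>A. f a) + (INF b\<in>B. g b)"
proof (rule ennreal_le_epsilon)
  fix e :: real assume fin: "(INF a\<in>A. f a) + (INF b\<in>B. g b) < top" and e: "0 < e"
  define IA where "IA = (INF a\<in>A. f a)"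
  define IB where "IB = (INF b\<in>B. g b)"
  have fin': "IA + IB < top" using fin unfolding IA_def IB_def .
  have IA: "IA \<noteq> top"
  proof
    assume "IA = top" then have "IA + IB = top" by simp
    with fin' show False by simp
  qed
  have IB: "IB \<noteq> top"
  proof
    assume "IB = top" then have "IA + IB = top" by simp
    with fin' show False by simp
  qed
  have e2: "0 < ennreal (e/2)" using e by simp
  have "IA + 0 < IA + ennreal (e/2)" using IA e2 by (simp only: ennreal_add_left_cancel_less) simp
  then have "IA < IA + ennreal (e/2)" by simp
  then obtain a where a: "a \<in> A" "f a < IA + ennreal (e/2)" unfolding IA_def by (auto simp: INF_less_iff)
  have "IB + 0 < IB + ennreal (e/2)" using IB e2 by (simp only: ennreal_add_left_cancel_less) simp
  then have "IB < IB + ennreal (e/2)" by simp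
  then obtain b where b: "b \<in> B" "g b < IB + ennreal (e/2)" unfolding IB_def by (auto simp: INF_less_iff)
  have "c \<le> f a + g b" using le a b by blast
  also have "\<dots> \<le> (IA + ennreal (e/2)) + (IB + ennreal (e/2))"
    using a b by (intro add_mono) auto
  also have "\<dots> = IA + IB + (ennreal (e/2) + ennreal (e/2))" by (simp add: ac_simps)
  also have "ennreal (e/2) + ennreal (e/2) = ennreal e" using e by (simp add: ennreal_plus[symmetric] del: ennreal_plus)
  finally show "c \<le> (INF a\<in>A. f a) + (INF b\<in>B. g b) + ennreal e" unfolding IA_def IB_def .
qed

lemma meas_comp_dist:
  assumes Y: "mm_space Y dY muY" and phi: "\<phi> \<in> measurable muX muY"
  shows "(\<lambda>z. dY (\<phi> (fst z)) (\<phi> (snd z))) \<in> borel_measurable (muX \<Otimes>\<^sub>M muX)"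
proof -
  have pm: "(\<lambda>z. (\<phi> (fst z), \<phi> (snd z))) \<in> measurable (muX \<Otimes>\<^sub>M muX) (muY \<Otimes>\<^sub>M muY)"
    using phi by (intro measurable_Pair measurable_compose[OF measurable_fst] measurable_compose[OF measurable_snd])
  from measurable_compose[OF pm mm_dist_measurable[OF Y]] show ?thesis by simp
qed

lemma transport_comp:
  assumes "\<phi> \<in> transport_maps muX muY" "\<psi> \<in> transport_maps muY muZ"
  shows "\<psi> \<circ> \<phi> \<in> transport_maps muX muZ"
proof -
  have m1: "\<phi> \<in> measurable muX muY" and d1: "distr muX muY \<phi> = muY"
    and m2: "\<psi> \<in> measurable muY muZ" and d2: "distr muY muZ \<psi> = muZ"
    using assms unfolding transport_maps_def by auto
  have "distr muX muZ (\<psi> \<circ> \<phi>) = distr (distr muX muY \<phi>) muZ \<psi>"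
    using distr_distr[OF m2 m1] by simp
  also have "\<dots> = muZ" using d1 d2 by simp
  finally show ?thesis unfolding transport_maps_def using measurable_comp[OF m1 m2] by simp
qed

lemma pushforward_pair:
  assumes X: "prob_space muX" and Y: "prob_space muY"
    and phi: "\<phi> \<in> transport_maps muX muY"
    and h: "h \<in> borel_measurable (muY \<Otimes>\<^sub>M muY)"
  shows "(\<integral>\<^sup>+z. h (\<phi> (fst z), \<phi> (snd z)) \<partial>(muX \<Otimes>\<^sub>M muX)) = (\<integral>\<^sup>+z. h z \<partial>(muY \<Otimes>\<^sub>M muY))"
proof -
  have m: "\<phi> \<in> measurable muX muY" and d: "distr muX muY \<phi> = muY"
    using phi unfolding transport_maps_def by auto
  have sf: "sigma_finite_measure (distr muX muY \<phi>)"
    unfolding d by (rule prob_space_imp_sigma_finite[OF Y])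
  have eq: "muY \<Otimes>\<^sub>M muY = distr (muX \<Otimes>\<^sub>M muX) (muY \<Otimes>\<^sub>M muY) (\<lambda>(x, y). (\<phi> x, \<phi> y))"
    using pair_measure_distr[OF m m sf] unfolding d .
  have pm: "(\<lambda>(x, y). (\<phi> x, \<phi> y)) \<in> measurable (muX \<Otimes>\<^sub>M muX) (muY \<Otimes>\<^sub>M muY)"
    using m by (simp add: measurable_pair_iff split_beta' measurable_compose[OF measurable_fst] measurable_compose[OF measurable_snd])
  have "(\<integral>\<^sup>+z. h z \<partial>(muY \<Otimes>\<^sub>M muY)) = (\<integral>\<^sup>+z. h z \<partial>(distr (muX \<Otimes>\<^sub>M muX) (muY \<Otimes>\<^sub>M muY) (\<lambda>(x, y). (\<phi> x, \<phi> y))))"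
    using eq by simp
  also have "\<dots> = (\<integral>\<^sup>+z. h ((\<lambda>(x, y). (\<phi> x, \<phi> y)) z) \<partial>(muX \<Otimes>\<^sub>M muX))"
    using h eq by (intro nn_integral_distr[OF pm]) simp
  finally show ?thesis by (simp add: split_beta')
qed

lemma dGM_triangle:
  assumes p: "p \<ge> 1" and X: "mm_space X dX muX" and Y: "mm_space Y dY muY" and Z: "mm_space Z dZ muZ"
  shows "dGM p dX muX dZ muZ \<le> dGM p dX muX dY muY + dGM p dY muY dZ muZ"
  unfolding dGM_def
proof (rule INF_add_le)
  fix \<phi> \<psi> assume phi: "\<phi> \<in> transport_maps muX muY" and psi: "\<psi> \<in> transport_maps muY muZ"
  have m1: "\<phi> \<in> measurable muX muY" using phi unfolding transport_maps_def by auto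
  have m2: "\<psi> \<in> measurable muY muZ" using psi unfolding transport_maps_def by auto
  have chi: "\<psi> \<circ> \<phi> \<in> transport_maps muX muZ" by (rule transport_comp[OF phi psi])
  have m12: "\<psi> \<circ> \<phi> \<in> measurable muX muZ" using chi unfolding transport_maps_def by auto
  have p0: "p > 0" using p by simp
  define f where "f z = \<bar>dX (fst z) (snd z) - dY (\<phi> (fst z)) (\<phi> (snd z))\<bar>" for z
  define g where "g z = \<bar>dY (\<phi> (fst z)) (\<phi> (snd z)) - dZ (\<psi> (\<phi> (fst z))) (\<psi> (\<phi> (snd z)))\<bar>" for z
  have mX: "(\<lambda>z. dX (fst z) (snd z)) \<in> borel_measurable (muX \<Otimes>\<^sub>M muX)" by (rule mm_dist_measurable[OF X])
  have mY: "(\<lambda>z. dY (\<phi> (fst z)) (\<phi> (snd z))) \<in> borel_measurable (muX \<Otimes>\<^sub>M muX)" by (rule meas_comp_dist[OF Y m1])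
  have mZ: "(\<lambda>z. dZ ((\<psi> \<circ> \<phi>) (fst z)) ((\<psi> \<circ> \<phi>) (snd z))) \<in> borel_measurable (muX \<Otimes>\<^sub>M muX)"
    by (rule meas_comp_dist[OF Z m12])
  then have mZ': "(\<lambda>z. dZ (\<psi> (\<phi> (fst z))) (\<psi> (\<phi> (snd z)))) \<in> borel_measurable (muX \<Otimes>\<^sub>M muX)" by simp
  have fm: "f \<in> borel_measurable (muX \<Otimes>\<^sub>M muX)" unfolding f_def using mX mY by measurable
  have gm: "g \<in> borel_measurable (muX \<Otimes>\<^sub>M muX)" unfolding g_def using mY mZ' by measurable
  have "(INF \<xi>\<in>transport_maps muX muZ. ennroot p (\<integral>\<^sup>+ z. ennreal (\<bar>dX (fst z) (snd z) - dZ (\<xi> (fst z)) (\<xi> (snd z))\<bar> powr p) \<partial>(muX \<Otimes>\<^sub>M muX)))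
     \<le> ennroot p (\<integral>\<^sup>+ z. ennreal (\<bar>dX (fst z) (snd z) - dZ ((\<psi> \<circ> \<phi>) (fst z)) ((\<psi> \<circ> \<phi>) (snd z))\<bar> powr p) \<partial>(muX \<Otimes>\<^sub>M muX))"
    by (rule INF_lower[OF chi])
  also have "\<dots> \<le> ennroot p (\<integral>\<^sup>+ z. ennreal ((f z + g z) powr p) \<partial>(muX \<Otimes>\<^sub>M muX))"
  proof (intro ennroot_mono[OF p0] nn_integral_mono ennreal_leI)
    fix z
    have "\<bar>dX (fst z) (snd z) - dZ ((\<psi> \<circ> \<phi>) (fst z)) ((\<psi> \<circ> \<phi>) (snd z))\<bar> \<le> f z + g z"
      unfolding f_def g_def by simp
    then show "\<bar>dX (fst z) (snd z) - dZ ((\<psi> \<circ> \<phi>) (fst z)) ((\<psi> \<circ> \<phi>) (snd z))\<bar> powr p \<le> (f z + g z) powr p"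
      using p0 by (intro powr_mono2) auto
  qed
  also have "\<dots> \<le> ennroot p (\<integral>\<^sup>+ z. ennreal (f z powr p) \<partial>(muX \<Otimes>\<^sub>M muX)) + ennroot p (\<integral>\<^sup>+ z. ennreal (g z powr p) \<partial>(muX \<Otimes>\<^sub>M muX))"
    by (rule minkowski_nn[OF p fm gm]) (auto simp: f_def g_def)
  also have "(\<integral>\<^sup>+ z. ennreal (g z powr p) \<partial>(muX \<Otimes>\<^sub>M muX))
     = (\<integral>\<^sup>+ z. ennreal (\<bar>dY (fst z) (snd z) - dZ (\<psi> (fst z)) (\<psi> (snd z))\<bar> powr p) \<partial>(muY \<Otimes>\<^sub>M muY))"
  proof -
    have hY: "(\<lambda>z. dY (fst z) (snd z)) \<in> borel_measurable (muY \<Otimes>\<^sub>M muY)" by (rule mm_dist_measurable[OF Y])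
    have hZ: "(\<lambda>z. dZ (\<psi> (fst z)) (\<psi> (snd z))) \<in> borel_measurable (muY \<Otimes>\<^sub>M muY)" by (rule meas_comp_dist[OF Z m2])
    have hm: "(\<lambda>z. ennreal (\<bar>dY (fst z) (snd z) - dZ (\<psi> (fst z)) (\<psi> (snd z))\<bar> powr p)) \<in> borel_measurable (muY \<Otimes>\<^sub>M muY)"
      using hY hZ by measurable
    have "(\<integral>\<^sup>+ z. (\<lambda>z. ennreal (\<bar>dY (fst z) (snd z) - dZ (\<psi> (fst z)) (\<psi> (snd z))\<bar> powr p)) (\<phi> (fst z), \<phi> (snd z)) \<partial>(muX \<Otimes>\<^sub>M muX))
      = (\<integral>\<^sup>+ z. ennreal (\<bar>dY (fst z) (snd z) - dZ (\<psi> (fst z)) (\<psi> (snd z))\<bar> powr p) \<partial>(muY \<Otimes>\<^sub>M muY))"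
      by (rule pushforward_pair[OF mm_space_D(3)[OF X] mm_space_D(3)[OF Y] phi hm])
    then show ?thesis by (simp add: g_def)
  qed
  finally show "(INF \<xi>\<in>transport_maps muX muZ. ennroot p (\<integral>\<^sup>+ z. ennreal (\<bar>dX (fst z) (snd z) - dZ (\<xi> (fst z)) (\<xi> (snd z))\<bar> powr p) \<partial>(muX \<Otimes>\<^sub>M muX)))
     \<le> ennroot p (\<integral>\<^sup>+ z. ennreal (\<bar>dX (fst z) (snd z) - dY (\<phi> (fst z)) (\<phi> (snd z))\<bar> powr p) \<partial>(muX \<Otimes>\<^sub>M muX))
      + ennroot p (\<integral>\<^sup>+ z. ennreal (\<bar>dY (fst z) (snd z) - dZ (\<psi> (fst z)) (\<psi> (snd z))\<bar> powr p) \<partial>(muY \<Otimes>\<^sub>M muY))"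
    by (simp add: f_def)
qed

lemma integral_zero_iso:
  fixes dX :: "'a \<Rightarrow> 'a \<Rightarrow> real" and dY :: "'b \<Rightarrow> 'b \<Rightarrow> real"
  assumes sp: "space (muX \<Otimes>\<^sub>M muX) = X \<times> X" and isom: "\<forall>x\<in>X. \<forall>x'\<in>X. dY (\<phi> x) (\<phi> x') = dX x x'"
  shows "(\<integral>\<^sup>+ z. ennreal (\<bar>dX (fst z) (snd z) - dY (\<phi> (fst z)) (\<phi> (snd z))\<bar> powr p) \<partial>(muX \<Otimes>\<^sub>M muX)) = 0"
proof -
  have "(\<integral>\<^sup>+ z. ennreal (\<bar>dX (fst z) (snd z) - dY (\<phi> (fst z)) (\<phi> (snd z))\<bar> powr p) \<partial>(muX \<Otimes>\<^sub>M muX))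
       = (\<integral>\<^sup>+ z. (0::ennreal) \<partial>(muX \<Otimes>\<^sub>M muX))"
  proof (rule nn_integral_cong)
    fix z assume "z \<in> space (muX \<Otimes>\<^sub>M muX)"
    then have "fst z \<in> X" "snd z \<in> X" using sp by (auto simp: mem_Times_iff)
    then show "ennreal (\<bar>dX (fst z) (snd z) - dY (\<phi> (fst z)) (\<phi> (snd z))\<bar> powr p) = 0"
      using isom by simp
  qed
  then show ?thesis by simp
qed

lemma iso_imp_dGM0:
  assumes p: "p \<ge> 1" and X: "mm_space X dX muX" and iso: "mm_iso X dX muX Y dY muY"
  shows "dGM p dX muX dY muY = 0"
proof -
  obtain \<phi> where isom: "\<forall>x\<in>X. \<forall>x'\<in>X. dY (\<phi> x) (\<phi> x') = dX x x'"
    and T: "\<phi> \<in> transport_maps muX muY"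
    using iso unfolding mm_iso_def transport_maps_def by auto
  have sp: "space (muX \<Otimes>\<^sub>M muX) = X \<times> X" using mm_space_D(4)[OF X] by (simp add: space_pair_measure)
  have "dGM p dX muX dY muY \<le> ennroot p (\<integral>\<^sup>+ z. ennreal (\<bar>dX (fst z) (snd z) - dY (\<phi> (fst z)) (\<phi> (snd z))\<bar> powr p) \<partial>(muX \<Otimes>\<^sub>M muX))"
    unfolding dGM_def by (rule INF_lower[OF T])
  also have "\<dots> = 0" using integral_zero_iso[where dX=dX and dY=dY and \<phi>=\<phi> and X=X and muX=muX and p=p, OF sp isom] by simp
  finally show ?thesis by simp
qed

lemma conv_of_sum:
  fixes a :: "nat \<Rightarrow> real"
  assumes p: "p > 0" and s: "(\<Sum>n. ennreal (a n powr p)) \<noteq> \<top>" and a0: "\<And>n. a n \<ge> 0"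
  shows "a \<longlonglongrightarrow> 0"
proof -
  have "summable (\<lambda>n. a n powr p)" by (rule summable_suminf_not_top) (use s in auto)
  then have "(\<lambda>n. a n powr p) \<longlonglongrightarrow> 0" by (rule summable_LIMSEQ_zero)
  then have "(\<lambda>n. (a n powr p) powr (1/p)) \<longlonglongrightarrow> 0"
    by (rule tendsto_zero_powrI[where b="1/p"]) (use p in auto)
  moreover have "(a n powr p) powr (1/p) = a n" for n
    using p a0[of n] by (simp add: powr_powr)
  ultimately show ?thesis by simp
qed

lemma conv_dist:
  fixes dX :: "'a \<Rightarrow> 'a \<Rightarrow> real" and dY :: "'b \<Rightarrow> 'b \<Rightarrow> real"
  assumes p: "p > 0" and s: "(\<Sum>n. ennreal (\<bar>dX x y - dY (\<phi> n x) (\<phi> n y)\<bar> powr p)) \<noteq> \<top>"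
  shows "(\<lambda>n. dY (\<phi> n x) (\<phi> n y)) \<longlonglongrightarrow> dX x y"
proof -
  have "(\<lambda>n. \<bar>dX x y - dY (\<phi> n x) (\<phi> n y)\<bar>) \<longlonglongrightarrow> 0"
    by (rule conv_of_sum[OF p s]) simp
  then have "(\<lambda>n. dX x y - dY (\<phi> n x) (\<phi> n y)) \<longlonglongrightarrow> 0" by (rule tendsto_rabs_zero_cancel)
  then have "(\<lambda>n. dX x y - (dX x y - dY (\<phi> n x) (\<phi> n y))) \<longlonglongrightarrow> dX x y - 0"
    by (intro tendsto_diff tendsto_const)
  then show ?thesis by simp
qed

lemma small_cost:
  assumes p: "p \<ge> 1" and lt: "ennroot p C < ennreal (e powr (1/p))" and e: "e > 0"
  shows "C < ennreal e"
proof -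
  have Ct: "C \<noteq> \<top>" using lt by auto
  then have "ennreal (enn2real C powr (1/p)) < ennreal (e powr (1/p))" using lt by (simp add: ennroot_fin)
  then have lt2: "enn2real C powr (1/p) < e powr (1/p)"
    by (simp add: ennreal_less_iff)
  have "enn2real C < e"
  proof (rule ccontr)
    assume "\<not> enn2real C < e"
    then have "e powr (1/p) \<le> enn2real C powr (1/p)" using e p by (intro powr_mono2) auto
    with lt2 show False by simp
  qed
  then show ?thesis using Ct e by (metis ennreal_enn2real_if ennreal_less_iff enn2real_nonneg less_le_trans)
qed

lemma dGM0_seq:
  assumes p: "p \<ge> 1" and X: "mm_space X dX muX" and Y: "mm_space Y dY muY"
    and z: "dGM p dX muX dY muY = 0"
  shows "\<exists>\<phi>. (\<forall>n. \<phi> n \<in> transport_maps muX muY) \<and>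
     (AE x in muX. AE y in muX. (\<lambda>n. dY (\<phi> n x) (\<phi> n y)) \<longlonglongrightarrow> dX x y)"
proof -
  define C where "C \<phi> = (\<integral>\<^sup>+ z. ennreal (\<bar>dX (fst z) (snd z) - dY (\<phi> (fst z)) (\<phi> (snd z))\<bar> powr p) \<partial>(muX \<Otimes>\<^sub>M muX))" for \<phi>
  have p0: "p > 0" using p by simp
  have ex: "\<exists>\<phi>. \<phi> \<in> transport_maps muX muY \<and> C \<phi> < ennreal ((1/2)^n)" for n :: nat
  proof -
    have e: "(1/2::real)^n > 0" by simp
    have "dGM p dX muX dY muY < ennreal (((1/2)^n) powr (1/p))" using z e by simp
    then obtain \<phi> where \<phi>: "\<phi> \<in> transport_maps muX muY" "ennroot p (C \<phi>) < ennreal (((1/2)^n) powr (1/p))"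
      unfolding dGM_def C_def by (auto simp: INF_less_iff)
    show ?thesis using \<phi> small_cost[OF p \<phi>(2) e] by blast
  qed
  have "\<forall>n. \<exists>\<phi>. \<phi> \<in> transport_maps muX muY \<and> C \<phi> < ennreal ((1/2)^n)" using ex by blast
  then have "\<exists>f. \<forall>n. f n \<in> transport_maps muX muY \<and> C (f n) < ennreal ((1/2)^n)" by (rule choice)
  then obtain \<phi> where \<phi>: "\<And>n. \<phi> n \<in> transport_maps muX muY" "\<And>n. C (\<phi> n) < ennreal ((1/2)^n)"
    by blast
  have m: "\<phi> n \<in> measurable muX muY" for n using \<phi>(1)[of n] unfolding transport_maps_def by auto
  define g where "g n z = ennreal (\<bar>dX (fst z) (snd z) - dY (\<phi> n (fst z)) (\<phi> n (snd z))\<bar> powr p)" for n z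
  have mX: "(\<lambda>z. dX (fst z) (snd z)) \<in> borel_measurable (muX \<Otimes>\<^sub>M muX)" by (rule mm_dist_measurable[OF X])
  have gm: "g n \<in> borel_measurable (muX \<Otimes>\<^sub>M muX)" for n
  proof -
    have mY: "(\<lambda>z. dY (\<phi> n (fst z)) (\<phi> n (snd z))) \<in> borel_measurable (muX \<Otimes>\<^sub>M muX)"
      by (rule meas_comp_dist[OF Y m])
    show ?thesis unfolding g_def using mX mY by measurable
  qed
  define G where "G z = (\<Sum>n. g n z)" for z
  have Gm: "G \<in> borel_measurable (muX \<Otimes>\<^sub>M muX)" unfolding G_def using gm by measurable
  have "(\<integral>\<^sup>+ z. G z \<partial>(muX \<Otimes>\<^sub>M muX)) = (\<Sum>n. C (\<phi> n))"
    unfolding G_def C_def g_def[abs_def] using gm[unfolded g_def[abs_def]] by (rule nn_integral_suminf)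
  also have "\<dots> \<le> (\<Sum>n. ennreal ((1/2)^n))"
    using \<phi>(2) by (intro suminf_le) (auto intro: less_imp_le)
  also have "\<dots> = ennreal 2"
  proof -
    have "(\<lambda>n. (1/2::real)^n) sums (1 / (1 - 1/2))" by (rule geometric_sums) simp
    then show ?thesis by (subst suminf_ennreal_eq) auto
  qed
  finally have "(\<integral>\<^sup>+ z. G z \<partial>(muX \<Otimes>\<^sub>M muX)) \<noteq> \<top>" by (auto simp: top_unique)
  then have ae: "AE z in muX \<Otimes>\<^sub>M muX. G z \<noteq> \<top>" using nn_integral_PInf_AE[OF Gm] by simp
  interpret P: pair_sigma_finite muX muX
    unfolding pair_sigma_finite_def using prob_space_imp_sigma_finite[OF mm_space_D(3)[OF X]] by simp
  have "AE x in muX. AE y in muX. G (x, y) \<noteq> \<top>" using P.AE_pair[OF ae] .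
  then have "AE x in muX. AE y in muX. (\<lambda>n. dY (\<phi> n x) (\<phi> n y)) \<longlonglongrightarrow> dX x y"
  proof (rule eventually_mono)
    fix x assume "AE y in muX. G (x, y) \<noteq> \<top>"
    then show "AE y in muX. (\<lambda>n. dY (\<phi> n x) (\<phi> n y)) \<longlonglongrightarrow> dX x y"
    proof (rule eventually_mono)
      fix y assume "G (x, y) \<noteq> \<top>"
      then show "(\<lambda>n. dY (\<phi> n x) (\<phi> n y)) \<longlonglongrightarrow> dX x y"
        by (intro conv_dist[OF p0]) (simp add: G_def g_def)
    qed
  qed
  then show ?thesis using \<phi>(1) by blast
qed

fun pickl :: "(nat \<Rightarrow> 'a \<Rightarrow> 'a list \<Rightarrow> bool) \<Rightarrow> nat \<Rightarrow> 'a list" where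
  "pickl R 0 = []"
| "pickl R (Suc k) = pickl R k @ [SOME y. R k y (pickl R k)]"

lemma pickl_length [simp]: "length (pickl R k) = k"
  by (induction k) auto

lemma pickl_prefix: "take m (pickl R (m + d)) = pickl R m"
  by (induction d) auto

lemma pickl_nth: "j < m \<Longrightarrow> j < n \<Longrightarrow> pickl R m ! j = pickl R n ! j"
proof -
  assume "j < m" "j < n"
  have "pickl R m ! j = take (Suc j) (pickl R m) ! j" using \<open>j < m\<close> by simp
  also have "take (Suc j) (pickl R m) = pickl R (Suc j)"
    using pickl_prefix[of "Suc j" R "m - Suc j"] \<open>j < m\<close> by simp
  also have "\<dots> = take (Suc j) (pickl R n)"
    using pickl_prefix[of "Suc j" R "n - Suc j"] \<open>j < n\<close> by simp
  also have "\<dots> ! j = pickl R n ! j" by simp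
  finally show ?thesis .
qed

lemma pickl_inv:
  assumes ex: "\<And>k L. length L = k \<Longrightarrow> (\<forall>j<k. R j (L!j) (take j L)) \<Longrightarrow> \<exists>y. R k y L"
  shows "\<forall>j<k. R j (pickl R k ! j) (take j (pickl R k))"
proof (induction k)
  case 0 then show ?case by simp
next
  case (Suc k)
  define y where "y = (SOME y. R k y (pickl R k))"
  have "\<exists>y. R k y (pickl R k)" using ex[OF pickl_length Suc.IH] .
  then have y: "R k y (pickl R k)" unfolding y_def by (rule someI_ex)
  show ?case
  proof (intro allI impI)
    fix j assume j: "j < Suc k"
    show "R j (pickl R (Suc k) ! j) (take j (pickl R (Suc k)))"
    proof (cases "j < k")
      case True
      then show ?thesis using Suc.IH by (simp add: y_def[symmetric] nth_append)
    next
      case False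
      then have "j = k" using j by simp
      then show ?thesis using y by (simp add: y_def[symmetric] nth_append)
    qed
  qed
qed

lemma seq_choice:
  assumes ex: "\<And>k L. length L = k \<Longrightarrow> (\<forall>j<k. R j (L!j) (take j L)) \<Longrightarrow> \<exists>y. R k y L"
  shows "\<exists>s. \<forall>k. R k (s k) (map s [0..<k])"
proof -
  define s where "s k = pickl R (Suc k) ! k" for k
  have m: "map s [0..<k] = pickl R k" for k
  proof (rule nth_equalityI)
    show "length (map s [0..<k]) = length (pickl R k)" by simp
    fix j assume "j < length (map s [0..<k])"
    then have j: "j < k" by simp
    then show "map s [0..<k] ! j = pickl R k ! j"
      unfolding s_def using pickl_nth[of j "Suc j" k R] by simp
  qed
  have "R k (s k) (map s [0..<k])" for k
  proof -
    have "R k (pickl R (Suc k) ! k) (take k (pickl R (Suc k)))"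
      using pickl_inv[where R=R and k="Suc k", OF ex] by blast
    moreover have "take k (pickl R (Suc k)) = pickl R k"
      using pickl_prefix[of k R 1] by simp
    ultimately show ?thesis unfolding m s_def by simp
  qed
  then show ?thesis by blast
qed

locale hard = MX: Metric_space X dX + MY: Metric_space Y dY
  for X :: "'a set" and dX and Y :: "'b set" and dY +
  fixes muX :: "'a measure" and muY :: "'b measure" and \<phi> :: "nat \<Rightarrow> 'a \<Rightarrow> 'b"
  assumes mmX: "mm_space X dX muX" and mmY: "mm_space Y dY muY"
    and T: "\<And>n. \<phi> n \<in> transport_maps muX muY"
    and ae: "AE x in muX. AE y in muX. (\<lambda>n. dY (\<phi> n x) (\<phi> n y)) \<longlonglongrightarrow> dX x y"
begin

definition Q where "Q x y \<longleftrightarrow> (\<lambda>n. dY (\<phi> n x) (\<phi> n y)) \<longlonglongrightarrow> dX x y"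
definition Good where "Good = {x \<in> X. AE y in muX. Q x y}"

lemma spX: "space muX = X" using mm_space_D(4)[OF mmX] .
lemma spY: "space muY = Y" using mm_space_D(4)[OF mmY] .
lemma probX: "prob_space muX" using mm_space_D(3)[OF mmX] .
lemma probY: "prob_space muY" using mm_space_D(3)[OF mmY] .
lemma cX: "compact_space MX.mtopology" using mm_space_D(2)[OF mmX] .
lemma cY: "compact_space MY.mtopology" using mm_space_D(2)[OF mmY] .

lemma phi_meas: "\<phi> n \<in> measurable muX muY" using T[of n] unfolding transport_maps_def by auto
lemma phi_distr: "distr muX muY (\<phi> n) = muY" using T[of n] unfolding transport_maps_def by auto

lemma phi_in: "x \<in> X \<Longrightarrow> \<phi> n x \<in> Y"
  using measurable_space[OF phi_meas, of x n] spX spY by simp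

lemma Q_sym: "Q x y \<Longrightarrow> Q y x"
proof -
  assume "Q x y"
  moreover have "(\<lambda>n. dY (\<phi> n y) (\<phi> n x)) = (\<lambda>n. dY (\<phi> n x) (\<phi> n y))"
    using MY.commute by presburger
  moreover have "dX y x = dX x y" by (rule MX.commute)
  ultimately show "Q y x" unfolding Q_def by simp
qed

lemma Q_refl: "x \<in> X \<Longrightarrow> Q x x"
  unfolding Q_def using phi_in by simp

lemma AE_Good: "AE x in muX. x \<in> Good"
proof -
  have "AE x in muX. x \<in> X" using AE_space[of muX] spX by simp
  with ae show ?thesis unfolding Good_def Q_def by eventually_elim auto
qed

lemma dense_AE:
  assumes P: "AE x in muX. P x" and U: "openin MX.mtopology U" "U \<noteq> {}"
  shows "\<exists>x\<in>U. P x"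
proof (rule ccontr)
  assume "\<not> (\<exists>x\<in>U. P x)"
  obtain N where N1: "{x \<in> space muX. \<not> P x} \<subseteq> N" and N0: "emeasure muX N = 0" and Ns: "N \<in> sets muX"
    using P by (rule AE_E)
  have UX: "U \<subseteq> X" using U(1) MX.openin_mtopology by blast
  have "U \<subseteq> N" using N1 UX spX \<open>\<not> (\<exists>x\<in>U. P x)\<close> by blast
  moreover have "U \<in> sets muX" by (rule mm_open_sets[OF mmX U(1)])
  ultimately have "emeasure muX U \<le> emeasure muX N" using Ns by (intro emeasure_mono) auto
  also have "\<dots> = 0" using N0 by auto
  finally have "emeasure muX U = 0" by simp
  moreover have "emeasure muX U > 0" using mm_space_D(6)[OF mmX U] .
  ultimately show False by simp
qed

lemma X_ne: "X \<noteq> {}"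
  using prob_space.not_empty[OF probX] spX by simp

lemma base_ex:
  "\<exists>B::nat \<Rightarrow> 'a set. (\<forall>k. openin MX.mtopology (B k) \<and> B k \<noteq> {}) \<and>
     (\<forall>x\<in>X. \<forall>e>0. \<exists>k. \<forall>y\<in>B k. dX x y < e)"
proof -
  obtain D where D: "countable D" "D \<subseteq> X" "\<forall>x\<in>X. \<forall>e>0. \<exists>s\<in>D. dX s x < e"
    using MX.compact_countable_dense[OF cX] by (elim exE conjE) (rule that)
  have Dne: "D \<noteq> {}"
  proof -
    obtain x where "x \<in> X" using X_ne by blast
    then obtain s where "s \<in> D" using D(3) zero_less_one by blast
    then show ?thesis by blast
  qed
  define c where "c i = from_nat_into D i" for i
  define B where "B k = MX.mball (c (fst (prod_decode k))) (1 / real (Suc (snd (prod_decode k))))" for k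
  have cD: "c i \<in> D" for i unfolding c_def using Dne by (rule from_nat_into)
  have "openin MX.mtopology (B k) \<and> B k \<noteq> {}" for k
  proof -
    have "c (fst (prod_decode k)) \<in> X" using cD D(2) by blast
    then have "c (fst (prod_decode k)) \<in> B k" unfolding B_def by simp
    moreover have "openin MX.mtopology (B k)" unfolding B_def by simp
    ultimately show ?thesis by blast
  qed
  moreover have "\<exists>k. \<forall>y\<in>B k. dX x y < e" if x: "x \<in> X" and e: "e > 0" for x e
  proof -
    obtain m where m: "1 / real (Suc m) < e/2"
      using e by (metis half_gt_zero nat_approx_posE)
    have pos: "1 / real (Suc m) > 0" by simp
    obtain s where s: "s \<in> D" "dX s x < 1 / real (Suc m)"
      using D(3) x pos by blast
    obtain i where i: "c i = s" unfolding c_def using from_nat_into_surj[OF D(1) s(1)] by blast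
    have sX: "s \<in> X" using s(1) D(2) by blast
    have "\<forall>y\<in>B (prod_encode (i, m)). dX x y < e"
    proof
      fix y assume "y \<in> B (prod_encode (i, m))"
      then have y: "y \<in> X" "dX s y < 1 / real (Suc m)" unfolding B_def i by (auto simp: i)
      have "dX x y \<le> dX x s + dX s y" using MX.triangle[OF x sX y(1)] .
      also have "\<dots> < e" using s(2) y(2) m MX.commute[of x s] by linarith
      finally show "dX x y < e" .
    qed
    then show ?thesis by blast
  qed
  ultimately show ?thesis by blast
qed

end

lemma (in Metric_space) dist_abs_le:
  assumes "x \<in> M" "y \<in> M" "a \<in> M" "b \<in> M"
  shows "\<bar>d x y - d a b\<bar> \<le> d x a + d y b"
proof -
  have "d x y \<le> d x a + d a y" using triangle assms by blast
  moreover have "d a y \<le> d a b + d b y" using triangle assms by blast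
  moreover have "d a b \<le> d a x + d x b" using triangle assms by blast
  moreover have "d x b \<le> d x y + d y b" using triangle assms by blast
  ultimately show ?thesis using commute[of a x] commute[of b y] by linarith
qed

lemma (in Metric_space) dist_lim:
  assumes f: "limitin mtopology f a sequentially" and g: "limitin mtopology g b sequentially"
  shows "(\<lambda>n. d (f n) (g n)) \<longlonglongrightarrow> d a b"
proof (rule LIMSEQ_I)
  fix e :: real assume e: "e > 0"
  obtain N1 where N1: "\<And>n. n \<ge> N1 \<Longrightarrow> f n \<in> M \<and> d (f n) a < e/2" and a: "a \<in> M"
    using f e unfolding limit_metric_sequentially by (meson half_gt_zero)
  obtain N2 where N2: "\<And>n. n \<ge> N2 \<Longrightarrow> g n \<in> M \<and> d (g n) b < e/2" and b: "b \<in> M"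
    using g e unfolding limit_metric_sequentially by (meson half_gt_zero)
  show "\<exists>N. \<forall>n\<ge>N. norm (d (f n) (g n) - d a b) < e"
  proof (intro exI allI impI)
    fix n assume n: "n \<ge> max N1 N2"
    have "\<bar>d (f n) (g n) - d a b\<bar> \<le> d (f n) a + d (g n) b"
      using N1[of n] N2[of n] n a b by (intro dist_abs_le) auto
    also have "\<dots> < e" using N1[of n] N2[of n] n by simp
    finally show "norm (d (f n) (g n) - d a b) < e" by simp
  qed
qed

context hard
begin

lemma pt_ex: "\<exists>zp::nat\<Rightarrow>'a. (\<forall>k. zp k \<in> X \<and> zp k \<in> Good) \<and> (\<forall>j k. Q (zp j) (zp k)) \<and> (\<forall>x\<in>X. \<forall>e>0. \<exists>k. dX x (zp k) < e)"
proof -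
  obtain B :: "nat \<Rightarrow> 'a set" where B: "(\<forall>k. openin MX.mtopology (B k) \<and> B k \<noteq> {}) \<and>
    (\<forall>x\<in>X. \<forall>e>0. \<exists>k. \<forall>y\<in>B k. dX x y < e)"
    using base_ex by (rule exE)
  have B1': "\<forall>k. openin MX.mtopology (B k) \<and> B k \<noteq> {}" using B by (rule conjunct1)
  have B2': "\<forall>x\<in>X. \<forall>e>0. \<exists>k. \<forall>y\<in>B k. dX x y < e" using B by (rule conjunct2)
  have B1: "openin MX.mtopology (B k) \<and> B k \<noteq> {}" for k using B1' by simp
  have B2: "\<exists>k. \<forall>y\<in>B k. dX x y < e" if "x\<in>X" "e > 0" for x e using B2' that by simp
  define R where "R k y L \<longleftrightarrow> y \<in> B k \<and> y \<in> Good \<and> (\<forall>s\<in>set L. Q s y)" for k y and L :: "'a list"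
  have ex: "\<exists>y. R k y L" if len: "length L = k" and inv: "\<forall>j<k. R j (L!j) (take j L)" for k L
  proof -
    have LG: "set L \<subseteq> Good"
    proof
      fix s assume "s \<in> set L"
      then obtain j where "j < length L" "s = L ! j" by (auto simp: in_set_conv_nth)
      then show "s \<in> Good" using inv len unfolding R_def by auto
    qed
    have "AE y in muX. \<forall>s\<in>set L. Q s y"
    proof (rule AE_finite_allI)
      fix s assume "s \<in> set L"
      then show "AE y in muX. Q s y" using LG unfolding Good_def by auto
    qed simp
    then have "AE y in muX. y \<in> Good \<and> (\<forall>s\<in>set L. Q s y)" using AE_Good by eventually_elim auto
    then obtain y where "y \<in> B k" "y \<in> Good \<and> (\<forall>s\<in>set L. Q s y)"
      using dense_AE B1[of k] by blast
    then show ?thesis unfolding R_def by blast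
  qed
  obtain s where s: "\<And>k. R k (s k) (map s [0..<k])"
    using seq_choice[of R, OF ex] by blast
  have sG: "s k \<in> Good" for k using s[of k] unfolding R_def by auto
  have sX: "s k \<in> X" for k using sG[of k] unfolding Good_def by auto
  have Qlt: "Q (s j) (s k)" if "j < k" for j k
  proof -
    have "s j \<in> set (map s [0..<k])" using that by auto
    then show ?thesis using s[of k] unfolding R_def by blast
  qed
  have Qall: "Q (s j) (s k)" for j k
  proof (cases "j < k")
    case True then show ?thesis by (rule Qlt)
  next
    case False
    show ?thesis
    proof (cases "j = k")
      case True then show ?thesis using Q_refl sX by simp
    next
      case False
      then have "k < j" using \<open>\<not> j < k\<close> by simp
      then show ?thesis using Qlt Q_sym by blast
    qed
  qed
  have dens: "\<exists>k. dX x (s k) < e" if xe: "x \<in> X" "e > 0" for x e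
  proof -
    obtain k where "\<forall>y\<in>B k. dX x y < e" using B2[OF xe] by blast
    moreover have "s k \<in> B k" using s[of k] unfolding R_def by auto
    ultimately show ?thesis by blast
  qed
  show ?thesis using sX sG Qall dens by blast
qed

definition zpP where "zpP (zp :: nat \<Rightarrow> 'a) \<longleftrightarrow> (\<forall>k. zp k \<in> X \<and> zp k \<in> Good) \<and> (\<forall>j k. Q (zp j) (zp k)) \<and> (\<forall>x\<in>X. \<forall>e>0. \<exists>k. dX x (zp k) < e)"

definition zp :: "nat \<Rightarrow> 'a" where "zp = (SOME zp. zpP zp)"

lemma pt_props: "(\<forall>k. zp k \<in> X \<and> zp k \<in> Good) \<and> (\<forall>j k. Q (zp j) (zp k)) \<and> (\<forall>x\<in>X. \<forall>e>0. \<exists>k. dX x (zp k) < e)"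
proof -
  have "\<exists>zp. zpP zp" using pt_ex unfolding zpP_def .
  then have "zpP (SOME zp. zpP zp)" by (rule someI_ex)
  then have "zpP zp" unfolding zp_def .
  then show ?thesis unfolding zpP_def .
qed

lemma ptX: "zp k \<in> X" using conjunct1[OF pt_props] by simp
lemma ptG: "zp k \<in> Good" using conjunct1[OF pt_props] by simp
lemma ptQ: "Q (zp j) (zp k)" using conjunct1[OF conjunct2[OF pt_props]] by simp
lemma pt_dense: "x \<in> X \<Longrightarrow> e > 0 \<Longrightarrow> \<exists>k. dX x (zp k) < e"
  using conjunct2[OF conjunct2[OF pt_props]] by simp

definition Pd where "Pd (k::nat) r \<longleftrightarrow> (\<exists>l. limitin MY.mtopology (\<lambda>n. \<phi> (r n) (zp k)) l sequentially)"

lemma Pd_ex: "strict_mono (s::nat \<Rightarrow> nat) \<Longrightarrow> \<exists>r'. strict_mono r' \<and> Pd n (s \<circ> r')"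
proof -
  assume "strict_mono s"
  define \<sigma> where "\<sigma> m = \<phi> (s m) (zp n)" for m
  have "range \<sigma> \<subseteq> Y" unfolding \<sigma>_def using phi_in ptX by auto
  then obtain l r' where "l \<in> Y" "strict_mono r'" "limitin MY.mtopology (\<sigma> \<circ> r') l sequentially"
    using cY unfolding MY.compact_space_sequentially by blast
  then show ?thesis unfolding Pd_def \<sigma>_def by (auto simp: o_def)
qed

lemma Pd_stable: "strict_mono r \<Longrightarrow> Pd n s \<Longrightarrow> Pd n (s \<circ> r)"
proof -
  assume r: "strict_mono r" and "Pd n s"
  then obtain l where "limitin MY.mtopology (\<lambda>m. \<phi> (s m) (zp n)) l sequentially" unfolding Pd_def by blast
  from limitin_subsequence[OF r this] show "Pd n (s \<circ> r)" unfolding Pd_def by (auto simp: o_def)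
qed

end

context hard
begin

lemma subseqs_Pd: "subseqs Pd"
  by unfold_locales (rule Pd_ex)

definition rr :: "nat \<Rightarrow> nat" where "rr = subseqs.diagseq Pd"

lemma rr_mono: "strict_mono rr"
  unfolding rr_def by (rule subseqs.subseq_diagseq[OF subseqs_Pd])

lemma rr_conv: "\<exists>l. limitin MY.mtopology (\<lambda>n. \<phi> (rr n) (zp k)) l sequentially"
proof -
  have "Pd k (rr \<circ> (+) (Suc k))"
    unfolding rr_def by (rule subseqs.diagseq_holds[OF subseqs_Pd Pd_stable])
  then obtain l where l: "limitin MY.mtopology (\<lambda>n. \<phi> ((rr \<circ> (+) (Suc k)) n) (zp k)) l sequentially"
    unfolding Pd_def by blast
  have "limitin MY.mtopology (\<lambda>n. (\<lambda>i. \<phi> (rr i) (zp k)) (n + Suc k)) l sequentially"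
    using l by (simp add: o_def add.commute)
  then have "limitin MY.mtopology (\<lambda>i. \<phi> (rr i) (zp k)) l sequentially"
    by (rule limitin_sequentially_offset_rev)
  then show ?thesis by blast
qed

definition psi0 :: "nat \<Rightarrow> 'b" where
  "psi0 k = (SOME l. limitin MY.mtopology (\<lambda>n. \<phi> (rr n) (zp k)) l sequentially)"

lemma psi0_lim: "limitin MY.mtopology (\<lambda>n. \<phi> (rr n) (zp k)) (psi0 k) sequentially"
  unfolding psi0_def by (rule someI_ex[OF rr_conv])

lemma psi0_in: "psi0 k \<in> Y"
  using psi0_lim[of k] unfolding MY.limitin_metric by blast

lemma Q_sub: "Q x y \<Longrightarrow> (\<lambda>n. dY (\<phi> (rr n) x) (\<phi> (rr n) y)) \<longlonglongrightarrow> dX x y"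
proof -
  assume "Q x y"
  then have "(\<lambda>n. dY (\<phi> n x) (\<phi> n y)) \<longlonglongrightarrow> dX x y" unfolding Q_def .
  from LIMSEQ_subseq_LIMSEQ[OF this rr_mono] show ?thesis by (simp add: o_def)
qed

lemma psi0_dist: "dY (psi0 j) (psi0 k) = dX (zp j) (zp k)"
proof -
  have "(\<lambda>n. dY (\<phi> (rr n) (zp j)) (\<phi> (rr n) (zp k))) \<longlonglongrightarrow> dY (psi0 j) (psi0 k)"
    by (rule MY.dist_lim[OF psi0_lim psi0_lim])
  moreover have "(\<lambda>n. dY (\<phi> (rr n) (zp j)) (\<phi> (rr n) (zp k))) \<longlonglongrightarrow> dX (zp j) (zp k)"
    by (rule Q_sub[OF ptQ])
  ultimately show ?thesis by (rule LIMSEQ_unique)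
qed

definition psiP where "psiP x y \<longleftrightarrow> y \<in> Y \<and> (\<forall>k. dY y (psi0 k) = dX x (zp k))"

lemma psiP_unique:
  assumes x: "x \<in> X" and y: "psiP x y" and y': "psiP x y'"
  shows "y = y'"
proof -
  have yY: "y \<in> Y" and y'Y: "y' \<in> Y" using y y' unfolding psiP_def by auto
  have "dY y y' \<le> 0"
  proof (rule field_le_epsilon)
    fix e :: real assume e: "e > 0"
    obtain k where k: "dX x (zp k) < e/2" using pt_dense[OF x, of "e/2"] e by auto
    have "dY y y' \<le> dY y (psi0 k) + dY (psi0 k) y'" using MY.triangle[OF yY psi0_in y'Y] .
    also have "\<dots> = dX x (zp k) + dX x (zp k)"
      using y y' MY.commute[of "psi0 k" y'] unfolding psiP_def by simp
    also have "\<dots> < e" using k by simp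
    finally show "dY y y' \<le> 0 + e" by simp
  qed
  then have "dY y y' = 0" using MY.nonneg[of y y'] by simp
  then show ?thesis using MY.zero[OF yY y'Y] by simp
qed

lemma psiP_ex:
  assumes x: "x \<in> X"
  shows "\<exists>y. psiP x y"
proof -
  have "\<forall>m. \<exists>k. dX x (zp k) < 1 / real (Suc m)" using pt_dense[OF x] by simp
  then obtain kk where kk: "\<And>m. dX x (zp (kk m)) < 1 / real (Suc m)" by metis
  define \<sigma> where "\<sigma> m = psi0 (kk m)" for m
  have "range \<sigma> \<subseteq> Y" unfolding \<sigma>_def using psi0_in by auto
  then obtain y r where yY: "y \<in> Y" and r: "strict_mono r" and lim: "limitin MY.mtopology (\<sigma> \<circ> r) y sequentially"
    using cY unfolding MY.compact_space_sequentially by blast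
  have zlim: "limitin MX.mtopology (\<lambda>m. zp (kk (r m))) x sequentially"
    unfolding MX.limit_metric_sequentially
  proof (intro conjI allI impI)
    show "x \<in> X" by (rule x)
    fix e :: real assume e: "e > 0"
    obtain N where N: "1 / real (Suc N) < e" using e by (metis nat_approx_posE)
    show "\<exists>N. \<forall>n\<ge>N. zp (kk (r n)) \<in> X \<and> dX (zp (kk (r n))) x < e"
    proof (intro exI allI impI conjI)
      fix n assume n: "n \<ge> N"
      show "zp (kk (r n)) \<in> X" by (rule ptX)
      have "n \<le> r n" using seq_suble[OF r] by simp
      then have "1 / real (Suc (r n)) \<le> 1 / real (Suc N)" using n by (simp add: frac_le)
      then show "dX (zp (kk (r n))) x < e" using kk[of "r n"] N MX.commute[of x "zp (kk (r n))"] by linarith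
    qed
  qed
  have "psiP x y"
    unfolding psiP_def
  proof (intro conjI allI)
    show "y \<in> Y" by (rule yY)
    fix j
    have c1: "limitin MY.mtopology (\<lambda>m. psi0 j) (psi0 j) sequentially"
      using psi0_in by simp
    have c2: "limitin MX.mtopology (\<lambda>m. zp j) (zp j) sequentially"
      using ptX by simp
    have "(\<lambda>m. dY ((\<sigma> \<circ> r) m) (psi0 j)) \<longlonglongrightarrow> dY y (psi0 j)"
      by (rule MY.dist_lim[OF lim c1])
    moreover have "(\<lambda>m. dX (zp (kk (r m))) (zp j)) \<longlonglongrightarrow> dX x (zp j)"
      by (rule MX.dist_lim[OF zlim c2])
    moreover have "(\<lambda>m. dY ((\<sigma> \<circ> r) m) (psi0 j)) = (\<lambda>m. dX (zp (kk (r m))) (zp j))"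
      unfolding \<sigma>_def o_def by (simp add: psi0_dist)
    ultimately show "dY y (psi0 j) = dX x (zp j)" using LIMSEQ_unique by metis
  qed
  then show ?thesis by blast
qed

definition psi :: "'a \<Rightarrow> 'b" where "psi x = (THE y. psiP x y)"

lemma psi_P: "x \<in> X \<Longrightarrow> psiP x (psi x)"
proof -
  assume x: "x \<in> X"
  have "\<exists>!y. psiP x y" using psiP_ex[OF x] psiP_unique[OF x] by blast
  then show ?thesis unfolding psi_def by (rule theI')
qed

lemma psi_in: "x \<in> X \<Longrightarrow> psi x \<in> Y"
  using psi_P unfolding psiP_def by blast

lemma psi_dist0: "x \<in> X \<Longrightarrow> dY (psi x) (psi0 k) = dX x (zp k)"
  using psi_P unfolding psiP_def by blast

lemma psi_isom:
  assumes x: "x \<in> X" and x': "x' \<in> X"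
  shows "dY (psi x) (psi x') = dX x x'"
proof -
  have A: "dY (psi x) (psi x') \<le> dX x x' + e" and B: "dX x x' \<le> dY (psi x) (psi x') + e" if e: "e > 0" for e
  proof -
    obtain k where k: "dX x (zp k) < e/4" using pt_dense[OF x, of "e/4"] e by auto
    obtain k' where k': "dX x' (zp k') < e/4" using pt_dense[OF x', of "e/4"] e by auto
    have px: "psi x \<in> Y" and px': "psi x' \<in> Y" using psi_in x x' by auto
    have d1: "dY (psi x) (psi0 k) = dX x (zp k)" using psi_dist0[OF x] .
    have d2: "dY (psi x') (psi0 k') = dX x' (zp k')" using psi_dist0[OF x'] .
    have d3: "dY (psi0 k) (psi0 k') = dX (zp k) (zp k')" by (rule psi0_dist)
    have t1: "dY (psi x) (psi x') \<le> dY (psi x) (psi0 k) + dY (psi0 k) (psi x')"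
      using MY.triangle[OF px psi0_in px'] .
    have t2: "dY (psi0 k) (psi x') \<le> dY (psi0 k) (psi0 k') + dY (psi0 k') (psi x')"
      using MY.triangle[OF psi0_in psi0_in px'] .
    have t3: "dX (zp k) (zp k') \<le> dX (zp k) x + dX x (zp k')"
      using MX.triangle[OF ptX x ptX] .
    have t4: "dX x (zp k') \<le> dX x x' + dX x' (zp k')"
      using MX.triangle[OF x x' ptX] .
    have t5: "dX x x' \<le> dX x (zp k) + dX (zp k) x'"
      using MX.triangle[OF x ptX x'] .
    have t6: "dX (zp k) x' \<le> dX (zp k) (zp k') + dX (zp k') x'"
      using MX.triangle[OF ptX ptX x'] .
    have t7: "dY (psi0 k) (psi0 k') \<le> dY (psi0 k) (psi x) + dY (psi x) (psi0 k')"
      using MY.triangle[OF psi0_in px psi0_in] .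
    have t8: "dY (psi x) (psi0 k') \<le> dY (psi x) (psi x') + dY (psi x') (psi0 k')"
      using MY.triangle[OF px px' psi0_in] .
    have c: "dY (psi0 k') (psi x') = dY (psi x') (psi0 k')" "dX (zp k) x = dX x (zp k)"
      "dX x' (zp k') = dX (zp k') x'" "dY (psi0 k) (psi x) = dY (psi x) (psi0 k)"
      by (rule MY.commute MX.commute)+
    have "dY (psi x) (psi x') \<le> dX x (zp k) + (dX (zp k) (zp k') + dX x' (zp k'))"
      using t1 t2 d1 d2 d3 c(1) by linarith
    also have "\<dots> \<le> dX x (zp k) + ((dX x (zp k) + (dX x x' + dX x' (zp k'))) + dX x' (zp k'))"
      using t3 t4 c(2) by linarith
    also have "\<dots> \<le> dX x x' + e" using k k' by linarith
    finally show "dY (psi x) (psi x') \<le> dX x x' + e" .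
    have "dX x x' \<le> dX x (zp k) + (dY (psi0 k) (psi0 k') + dX x' (zp k'))"
      using t5 t6 d3 c(3) by linarith
    also have "\<dots> \<le> dX x (zp k) + ((dX x (zp k) + (dY (psi x) (psi x') + dX x' (zp k'))) + dX x' (zp k'))"
      using t7 t8 d1 d2 c(1) c(4) by linarith
    also have "\<dots> \<le> dY (psi x) (psi x') + e" using k k' by linarith
    finally show "dX x x' \<le> dY (psi x) (psi x') + e" .
  qed
  have "dY (psi x) (psi x') \<le> dX x x'" using A by (rule field_le_epsilon) auto
  moreover have "dX x x' \<le> dY (psi x) (psi x')" using B by (rule field_le_epsilon) auto
  ultimately show ?thesis by simp
qed

end

context hard
begin

definition G' where "G' = {x \<in> X. \<forall>k. Q x (zp k)}"

lemma AE_G': "AE x in muX. x \<in> G'"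
proof -
  have "AE x in muX. Q x (zp k)" for k
  proof -
    have "AE y in muX. Q (zp k) y" using ptG[of k] unfolding Good_def by auto
    then show ?thesis by eventually_elim (rule Q_sym)
  qed
  then have "AE x in muX. \<forall>k. Q x (zp k)" by (simp add: AE_all_countable)
  moreover have "AE x in muX. x \<in> X" using AE_space[of muX] spX by simp
  ultimately show ?thesis unfolding G'_def by eventually_elim auto
qed

lemma conv_psi:
  assumes x: "x \<in> G'"
  shows "limitin MY.mtopology (\<lambda>n. \<phi> (rr n) x) (psi x) sequentially"
proof -
  have xX: "x \<in> X" using x unfolding G'_def by auto
  have Qx: "Q x (zp k)" for k using x unfolding G'_def by auto
  show ?thesis unfolding MY.limitin_metric
  proof (intro conjI allI impI)
    show "psi x \<in> Y" by (rule psi_in[OF xX])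
    fix e :: real assume e: "e > 0"
    obtain k where k: "dX x (zp k) < e/3" using pt_dense[OF xX, of "e/3"] e by auto
    have ev1: "eventually (\<lambda>n. dY (\<phi> (rr n) x) (\<phi> (rr n) (zp k)) < e/3) sequentially"
      using Q_sub[OF Qx[of k]] k by (rule order_tendstoD(2))
    have ev2: "eventually (\<lambda>n. \<phi> (rr n) (zp k) \<in> Y \<and> dY (\<phi> (rr n) (zp k)) (psi0 k) < e/3) sequentially"
    proof -
      have "e/3 > 0" using e by simp
      then show ?thesis using psi0_lim[of k] unfolding MY.limitin_metric by blast
    qed
    have d3: "dY (psi0 k) (psi x) = dX x (zp k)" using psi_dist0[OF xX, of k] MY.commute[of "psi0 k" "psi x"] by simp
    show "eventually (\<lambda>n. \<phi> (rr n) x \<in> Y \<and> dY (\<phi> (rr n) x) (psi x) < e) sequentially"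
      using ev1 ev2
    proof eventually_elim
      case (elim n)
      have a: "\<phi> (rr n) x \<in> Y" by (rule phi_in[OF xX])
      have b: "\<phi> (rr n) (zp k) \<in> Y" by (rule phi_in[OF ptX])
      have "dY (\<phi> (rr n) x) (psi x) \<le> dY (\<phi> (rr n) x) (\<phi> (rr n) (zp k)) + dY (\<phi> (rr n) (zp k)) (psi x)"
        using MY.triangle[OF a b psi_in[OF xX]] .
      also have "dY (\<phi> (rr n) (zp k)) (psi x) \<le> dY (\<phi> (rr n) (zp k)) (psi0 k) + dY (psi0 k) (psi x)"
        using MY.triangle[OF b psi0_in psi_in[OF xX]] .
      finally have "dY (\<phi> (rr n) x) (psi x) \<le> dY (\<phi> (rr n) x) (\<phi> (rr n) (zp k)) + (dY (\<phi> (rr n) (zp k)) (psi0 k) + dY (psi0 k) (psi x))"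
        by simp
      then show ?case using a elim d3 k by linarith
    qed
  qed
qed

lemma psi_open_pre:
  assumes U: "openin MY.mtopology U"
  shows "openin MX.mtopology (psi -` U \<inter> X)"
  unfolding MX.openin_mtopology
proof (intro conjI allI impI)
  show "psi -` U \<inter> X \<subseteq> X" by blast
  fix x assume x: "x \<in> psi -` U \<inter> X"
  then have xX: "x \<in> X" and pU: "psi x \<in> U" by auto
  obtain r where r: "r > 0" "MY.mball (psi x) r \<subseteq> U"
    using U pU unfolding MY.openin_mtopology by blast
  have "MX.mball x r \<subseteq> psi -` U \<inter> X"
  proof
    fix y assume "y \<in> MX.mball x r"
    then have yX: "y \<in> X" and d: "dX x y < r" by auto
    have "psi y \<in> MY.mball (psi x) r"
      using psi_in[OF xX] psi_in[OF yX] psi_isom[OF xX yX] d by simp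
    then show "y \<in> psi -` U \<inter> X" using r(2) yX by blast
  qed
  then show "\<exists>r>0. MX.mball x r \<subseteq> psi -` U \<inter> X" using r(1) by blast
qed

lemma psi_meas: "psi \<in> measurable muX muY"
proof (rule measurable_sigma_sets[OF mm_space_D(5)[OF mmY]])
  show "{U. openin MY.mtopology U} \<subseteq> Pow Y" using MY.openin_mtopology by blast
  show "psi \<in> space muX \<rightarrow> Y" using psi_in spX by auto
  fix U assume "U \<in> {U. openin MY.mtopology U}"
  then have "openin MX.mtopology (psi -` U \<inter> X)" by (intro psi_open_pre) simp
  then show "psi -` U \<inter> space muX \<in> sets muX" using mm_open_sets[OF mmX] spX by simp
qed

end

context hard
begin

lemma open_le:
  assumes U: "openin MY.mtopology U"
  shows "emeasure (distr muX muY psi) U \<le> emeasure muY U"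
proof -
  have Us: "U \<in> sets muY" by (rule mm_open_sets[OF mmY U])
  have ind_m: "indicator U \<in> borel_measurable muY" using Us by simp
  have ind_md: "indicator U \<in> borel_measurable (distr muX muY f)" for f
    using Us by simp
  have eqf: "emeasure (distr muX muY f) U = (\<integral>\<^sup>+ x. indicator U (f x) \<partial>muX)" if f: "f \<in> measurable muX muY" for f
  proof -
    have "emeasure (distr muX muY f) U = (\<integral>\<^sup>+ y. indicator U y \<partial>(distr muX muY f))"
      using Us by simp
    also have "\<dots> = (\<integral>\<^sup>+ x. indicator U (f x) \<partial>muX)"
      by (rule nn_integral_distr[OF f ind_md])
    finally show ?thesis .
  qed
  have "emeasure (distr muX muY psi) U = (\<integral>\<^sup>+ x. indicator U (psi x) \<partial>muX)"
    by (rule eqf[OF psi_meas])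
  also have "\<dots> \<le> (\<integral>\<^sup>+ x. liminf (\<lambda>n. indicator U (\<phi> (rr n) x)) \<partial>muX)"
  proof (rule nn_integral_mono_AE)
    show "AE x in muX. (indicator U (psi x) :: ennreal) \<le> liminf (\<lambda>n. indicator U (\<phi> (rr n) x))"
      using AE_G'
    proof eventually_elim
      case (elim x)
      show ?case
      proof (cases "psi x \<in> U")
        case True
        have "eventually (\<lambda>n. \<phi> (rr n) x \<in> U) sequentially"
          using conv_psi[OF elim] True U unfolding limitin_def by blast
        then have "eventually (\<lambda>n. (indicator U (\<phi> (rr n) x) :: ennreal) = 1) sequentially"
          by eventually_elim simp
        then have "((\<lambda>n. (indicator U (\<phi> (rr n) x) :: ennreal)) \<longlongrightarrow> 1) sequentially"
          by (rule tendsto_eventually)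
        then have "liminf (\<lambda>n. (indicator U (\<phi> (rr n) x) :: ennreal)) = 1"
          by (intro lim_imp_Liminf) auto
        then show ?thesis using True by simp
      next
        case False
        then show ?thesis by simp
      qed
    qed
  qed
  also have "\<dots> \<le> liminf (\<lambda>n. \<integral>\<^sup>+ x. indicator U (\<phi> (rr n) x) \<partial>muX)"
    by (rule nn_integral_liminf) (rule measurable_compose[OF phi_meas ind_m])
  also have "(\<lambda>n. \<integral>\<^sup>+ x. indicator U (\<phi> (rr n) x) \<partial>muX) = (\<lambda>n. emeasure muY U)"
  proof
    fix n
    have "(\<integral>\<^sup>+ x. indicator U (\<phi> (rr n) x) \<partial>muX) = emeasure (distr muX muY (\<phi> (rr n))) U"
      by (rule eqf[OF phi_meas, symmetric])
    also have "\<dots> = emeasure muY U" by (simp add: phi_distr)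
    finally show "(\<integral>\<^sup>+ x. indicator U (\<phi> (rr n) x) \<partial>muX) = emeasure muY U" .
  qed
  also have "liminf (\<lambda>n. emeasure muY U) = emeasure muY U"
    by (rule Liminf_const) simp
  finally show ?thesis .
qed

definition nu where "nu = distr muX muY psi"

lemma nu_prob: "prob_space nu"
  unfolding nu_def by (rule prob_space.prob_space_distr[OF probX psi_meas])

lemma sets_nu: "sets nu = sets muY" unfolding nu_def by simp
lemma space_nu: "space nu = Y" unfolding nu_def using spY by simp

lemma open_le_m:
  assumes U: "openin MY.mtopology U"
  shows "measure nu U \<le> measure muY U"
proof -
  interpret N: prob_space nu by (rule nu_prob)
  interpret MU: prob_space muY by (rule probY)
  have "ennreal (measure nu U) \<le> ennreal (measure muY U)"
    using open_le[OF U] unfolding nu_def[symmetric] N.emeasure_eq_measure MU.emeasure_eq_measure .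
  then show ?thesis by (simp add: ennreal_le_iff)
qed

lemma closed_le_m:
  assumes C: "closedin MY.mtopology C"
  shows "measure nu C \<le> measure muY C"
proof -
  interpret N: prob_space nu by (rule nu_prob)
  interpret MU: prob_space muY by (rule probY)
  have CY: "C \<subseteq> Y" using C MY.closedin_metric by blast
  define V where "V k = (\<Union>c\<in>C. MY.mball c (1 / real (Suc k)))" for k
  have Vo: "openin MY.mtopology (V k)" for k unfolding V_def by (intro openin_Union) auto
  have Vs: "V k \<in> sets muY" for k by (rule mm_open_sets[OF mmY Vo])
  have Vdec: "decseq V"
  proof (rule decseq_SucI)
    fix k
    have "1 / real (Suc (Suc k)) \<le> 1 / real (Suc k)" by (simp add: frac_le)
    then show "V (Suc k) \<subseteq> V k" unfolding V_def by (auto intro: MY.mball_subset_concentric[THEN subsetD])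
  qed
  have Vint: "(\<Inter>k. V k) = C"
  proof
    show "C \<subseteq> (\<Inter>k. V k)"
    proof
      fix c assume c: "c \<in> C"
      then have "c \<in> Y" using CY by blast
      then have "c \<in> MY.mball c (1 / real (Suc k))" for k by simp
      then show "c \<in> (\<Inter>k. V k)" unfolding V_def using c by blast
    qed
    show "(\<Inter>k. V k) \<subseteq> C"
    proof
      fix y assume y: "y \<in> (\<Inter>k. V k)"
      show "y \<in> C"
      proof (rule ccontr)
        assume yC: "y \<notin> C"
        have yY: "y \<in> Y" using y unfolding V_def by auto
        obtain r where r: "r > 0" "disjnt C (MY.mball y r)"
          using C yY yC unfolding MY.closedin_metric by blast
        obtain k where k: "1 / real (Suc k) < r" using r(1) by (metis nat_approx_posE)
        have "y \<in> V k" using y by blast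
        then obtain c where c: "c \<in> C" "y \<in> MY.mball c (1 / real (Suc k))" unfolding V_def by blast
        then have "c \<in> MY.mball y r" using k MY.commute[of c y] by auto
        then show False using r(2) c(1) unfolding disjnt_def by blast
      qed
    qed
  qed
  have l1: "(\<lambda>k. measure nu (V k)) \<longlonglongrightarrow> measure nu (\<Inter>k. V k)"
    using Vs Vdec sets_nu by (intro N.finite_Lim_measure_decseq) auto
  have l2: "(\<lambda>k. measure muY (V k)) \<longlonglongrightarrow> measure muY (\<Inter>k. V k)"
    using Vs Vdec by (intro MU.finite_Lim_measure_decseq) auto
  have "measure nu (\<Inter>k. V k) \<le> measure muY (\<Inter>k. V k)"
    using l1 l2 open_le_m[OF Vo] by (intro LIMSEQ_le) auto
  then show ?thesis unfolding Vint .
qed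

lemma open_eq:
  assumes U: "openin MY.mtopology U"
  shows "emeasure nu U = emeasure muY U"
proof -
  interpret N: prob_space nu by (rule nu_prob)
  interpret MU: prob_space muY by (rule probY)
  have UY: "U \<subseteq> Y" using U MY.openin_mtopology by blast
  have Us: "U \<in> sets muY" by (rule mm_open_sets[OF mmY U])
  have C: "closedin MY.mtopology (Y - U)"
    using U by (simp add: closedin_diff)
  have "measure nu (Y - U) \<le> measure muY (Y - U)" by (rule closed_le_m[OF C])
  moreover have "measure nu (Y - U) = 1 - measure nu U"
    using N.prob_compl[of U] Us sets_nu space_nu by simp
  moreover have "measure muY (Y - U) = 1 - measure muY U"
    using MU.prob_compl[of U] Us spY by simp
  ultimately have "measure muY U \<le> measure nu U" by simp
  with open_le_m[OF U] have "measure nu U = measure muY U" by simp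
  then show ?thesis by (simp add: N.emeasure_eq_measure MU.emeasure_eq_measure)
qed

lemma nu_eq: "distr muX muY psi = muY"
proof -
  have "nu = muY"
  proof (rule measure_eqI_generator_eq[where E="{U. openin MY.mtopology U}" and \<Omega>=Y and A="\<lambda>i. Y"])
    show "Int_stable {U. openin MY.mtopology U}" by (auto simp: Int_stable_def openin_Int)
    show "{U. openin MY.mtopology U} \<subseteq> Pow Y" using MY.openin_mtopology by blast
    show "\<And>U. U \<in> {U. openin MY.mtopology U} \<Longrightarrow> emeasure nu U = emeasure muY U"
      using open_eq by blast
    show "sets nu = sigma_sets Y {U. openin MY.mtopology U}" using sets_nu mm_space_D(5)[OF mmY] by simp
    show "sets muY = sigma_sets Y {U. openin MY.mtopology U}" using mm_space_D(5)[OF mmY] .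
    show "range (\<lambda>i. Y) \<subseteq> {U. openin MY.mtopology U}" by auto
    show "(\<Union>i. Y) = Y" by simp
    show "\<And>i. emeasure nu Y \<noteq> \<infinity>" using prob_space.emeasure_space_1[OF nu_prob] space_nu by simp
  qed
  then show ?thesis unfolding nu_def .
qed

lemma psi_cont: "continuous_map MX.mtopology MY.mtopology psi"
  unfolding MY.continuous_map_to_metric
proof (intro ballI allI impI)
  fix x and e :: real assume x: "x \<in> topspace MX.mtopology" and e: "e > 0"
  then have xX: "x \<in> X" by simp
  show "\<exists>U. openin MX.mtopology U \<and> x \<in> U \<and> (\<forall>y\<in>U. psi y \<in> MY.mball (psi x) e)"
  proof (intro exI conjI ballI)
    show "openin MX.mtopology (MX.mball x e)" by simp
    show "x \<in> MX.mball x e" using xX e by simp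
    fix y assume "y \<in> MX.mball x e"
    then have yX: "y \<in> X" and d: "dX x y < e" by auto
    show "psi y \<in> MY.mball (psi x) e" using psi_in[OF xX] psi_in[OF yX] psi_isom[OF xX yX] d by simp
  qed
qed

lemma psi_surj: "psi ` X = Y"
proof -
  have cX': "compactin MX.mtopology X" using cX unfolding compact_space_def by simp
  have cI: "compactin MY.mtopology (psi ` X)" by (rule image_compactin[OF cX' psi_cont])
  have clI: "closedin MY.mtopology (psi ` X)"
    by (rule compactin_imp_closedin[OF MY.Hausdorff_space_mtopology cI])
  have sub: "psi ` X \<subseteq> Y" using psi_in by auto
  have oD: "openin MY.mtopology (Y - psi ` X)"
    using clI unfolding closedin_def by simp
  have Ds: "Y - psi ` X \<in> sets muY" by (rule mm_open_sets[OF mmY oD])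
  have "emeasure muY (Y - psi ` X) = emeasure (distr muX muY psi) (Y - psi ` X)"
    using nu_eq by simp
  also have "\<dots> = emeasure muX (psi -` (Y - psi ` X) \<inter> space muX)"
    by (rule emeasure_distr[OF psi_meas Ds])
  also have "psi -` (Y - psi ` X) \<inter> space muX = {}" using spX by auto
  finally have "emeasure muY (Y - psi ` X) = 0" by simp
  then have "Y - psi ` X = {}" using mm_space_D(6)[OF mmY oD] by auto
  then show ?thesis using sub by blast
qed

lemma iso_result: "mm_iso X dX muX Y dY muY"
proof -
  have inj: "inj_on psi X"
  proof (rule inj_onI)
    fix x x' assume x: "x \<in> X" and x': "x' \<in> X" and eq: "psi x = psi x'"
    have "dX x x' = dY (psi x) (psi x')" using psi_isom[OF x x'] by simp
    also have "\<dots> = 0" using eq psi_in[OF x'] by simp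
    finally show "x = x'" using MX.zero[OF x x'] by simp
  qed
  have bij: "bij_betw psi X Y" using inj psi_surj by (simp add: bij_betw_def)
  show ?thesis unfolding mm_iso_def
  proof (rule exI[of _ psi], intro conjI ballI)
    show "bij_betw psi X Y" by (rule bij)
    show "psi \<in> measurable muX muY" by (rule psi_meas)
    show "distr muX muY psi = muY" by (rule nu_eq)
    fix x x' assume "x \<in> X" "x' \<in> X"
    then show "dY (psi x) (psi x') = dX x x'" by (rule psi_isom)
  qed
qed

end


theorem theorem2p1:
  fixes p :: real
    and X :: "'a set" and dX :: "'a \<Rightarrow> 'a \<Rightarrow> real" and muX :: "'a measure"
    and Y :: "'b set" and dY :: "'b \<Rightarrow> 'b \<Rightarrow> real" and muY :: "'b measure"
    and Z :: "'c set" and dZ :: "'c \<Rightarrow> 'c \<Rightarrow> real" and muZ :: "'c measure"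
  assumes "p \<ge> 1"
    and "mm_space X dX muX" and "mm_space Y dY muY" and "mm_space Z dZ muZ"
  shows "0 \<le> dGM p dX muX dY muY \<and> dGM p dX muX dY muY \<le> \<top>
    \<and> (dGM p dX muX dY muY = 0 \<longleftrightarrow> mm_iso X dX muX Y dY muY)
    \<and> dGM p dX muX dZ muZ \<le> dGM p dX muX dY muY + dGM p dY muY dZ muZ"
proof -
  note p = assms(1) and mX = assms(2) and mY = assms(3) and mZ = assms(4)
  have iff: "dGM p dX muX dY muY = 0 \<longleftrightarrow> mm_iso X dX muX Y dY muY"
  proof
    assume z: "dGM p dX muX dY muY = 0"
    obtain \<phi> where \<phi>: "\<forall>n. \<phi> n \<in> transport_maps muX muY"
      and ae: "AE x in muX. AE y in muX. (\<lambda>n. dY (\<phi> n x) (\<phi> n y)) \<longlonglongrightarrow> dX x y"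
      using dGM0_seq[OF p mX mY z] by blast
    have "hard X dX Y dY muX muY \<phi>"
    proof (intro hard.intro hard_axioms.intro)
      show "Metric_space X dX" by (rule mm_space_D(1)[OF mX])
      show "Metric_space Y dY" by (rule mm_space_D(1)[OF mY])
      show "mm_space X dX muX" by (rule mX)
      show "mm_space Y dY muY" by (rule mY)
      show "\<And>n. \<phi> n \<in> transport_maps muX muY" using \<phi> by blast
      show "AE x in muX. AE y in muX. (\<lambda>n. dY (\<phi> n x) (\<phi> n y)) \<longlonglongrightarrow> dX x y" by (rule ae)
    qed
    then show "mm_iso X dX muX Y dY muY" by (rule hard.iso_result)
  next
    assume "mm_iso X dX muX Y dY muY"
    then show "dGM p dX muX dY muY = 0" by (rule iso_imp_dGM0[OF p mX])
  qed
  show ?thesis using iff dGM_triangle[OF p mX mY mZ] by simp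
qed

end
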